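(* Let $q$ be a power of an odd prime, $j\in\mathbb F_q$, $S_j=\{x\in\mathbb F_q^d:\|x\|=j\}$, $A\subset S_j$, $B\subset\mathbb F_q^d$, and for $t\in\mathbb F_q$ let $\mu(t)$ be the number of pairs $(a,b)\in A\times B$ with $\|a-b\|=t$. Then \[\sum_{t\in\mathbb F_q}\mu^2(t)\le\frac{|A|^2|B|^2}{q}+q^{d-1}|A||B|+q^{-2}\eta^d(-1)G_1^d|A|\sum_{b,b'\in B,\ s,r\ne0}\eta^d(r)\,\chi\Big(jr+\frac{s^2\|b'-b\|}{r}\Big)\chi\big(s(\|b'\|-\|b\|)\big).\]
   Context: $\chi$ is a nontrivial additive character of $\mathbb F_q$, $\|x\|=x_1^2+\cdots+x_d^2$, $\eta$ is the quadratic character of $\mathbb F_q^*$, $G_1=\sum_{t\in\mathbb F_q^*}\eta(t)\chi(t)$ is the standard Gauss sum, and $s,r$ range over $\mathbb F_q^*$. *)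

theory Defs
  imports "HOL-Analysis.Analysis"
begin

definition nontriv_add_char :: "('a::field \<Rightarrow> complex) \<Rightarrow> bool" where
  "nontriv_add_char \<psi> \<longleftrightarrow> \<psi> 0 = 1 \<and> (\<forall>x y. \<psi> (x + y) = \<psi> x * \<psi> y) \<and> (\<exists>x. \<psi> x \<noteq> 1)"

text \<open>Quadratic character of F^*, extended by 0 at 0 (only used on nonzero arguments).\<close>
definition qchar :: "'a::field \<Rightarrow> complex" where
  "qchar t = (if t = 0 then 0 else if (\<exists>y. y ^ 2 = t) then 1 else -1)"

definition gauss1 :: "('a::{field,finite} \<Rightarrow> complex) \<Rightarrow> complex" where
  "gauss1 \<psi> = (\<Sum>t\<in>{t::'a. t \<noteq> 0}. qchar t * \<psi> t)"

definition sqn :: "'a::field ^ 'n \<Rightarrow> 'a" where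
  "sqn x = (\<Sum>i\<in>UNIV. (x $ i) ^ 2)"

end

theory Submission
  imports Defs
begin



lemma chr_add: "nontriv_add_char \<psi> \<Longrightarrow> \<psi> (x + y) = \<psi> x * \<psi> y"
  by (simp add: nontriv_add_char_def)
lemma chr_0: "nontriv_add_char \<psi> \<Longrightarrow> \<psi> 0 = 1"
  by (simp add: nontriv_add_char_def)
lemma chr_neg: "nontriv_add_char \<psi> \<Longrightarrow> \<psi> (- x) * \<psi> x = 1"
  by (metis chr_0 chr_add add.left_inverse)
lemma chr_nz: "nontriv_add_char \<psi> \<Longrightarrow> \<psi> x \<noteq> 0"
  by (metis chr_neg mult_zero_right zero_neq_one)
lemma chr_diff: "nontriv_add_char \<psi> \<Longrightarrow> \<psi> (x - y) = \<psi> x * \<psi> (- y)"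
  by (metis chr_add diff_conv_add_uminus)

lemma chr_sum: assumes "nontriv_add_char \<psi>"
  shows "\<psi> (\<Sum>i\<in>I. f i) = (\<Prod>i\<in>I. \<psi> (f i))"
proof (cases "finite I")
  case True then show ?thesis
    by (induction I rule: finite_induct) (auto simp: chr_0[OF assms] chr_add[OF assms])
qed (simp add: chr_0[OF assms])

lemma chr_nat: assumes "nontriv_add_char \<psi>"
  shows "\<psi> (of_nat k * x) = \<psi> x ^ k"
  by (induction k) (auto simp: chr_0[OF assms] chr_add[OF assms] distrib_right)

lemma finite_char: "\<exists>p>0. (of_nat p :: 'a::{field,finite}) = 0"
proof -
  have "\<not> inj (of_nat :: nat \<Rightarrow> 'a)"
  proof
    assume "inj (of_nat :: nat \<Rightarrow> 'a)"
    then have "finite (UNIV :: nat set)"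
      using finite_imageD[of "of_nat :: nat \<Rightarrow> 'a" UNIV] by simp
    then show False by simp
  qed
  then obtain m n where mn: "(of_nat m :: 'a) = of_nat n" "m \<noteq> n"
    unfolding inj_def by blast
  show ?thesis
  proof (cases "m < n")
    case True
    then have "(of_nat (n - m) :: 'a) = 0" using mn by (simp add: of_nat_diff)
    then show ?thesis using True by (intro exI[of _ "n - m"]) auto
  next
    case False
    then have "(of_nat (m - n) :: 'a) = 0" using mn by (simp add: of_nat_diff)
    then show ?thesis using False mn by (intro exI[of _ "m - n"]) auto
  qed
qed

lemma chr_norm: assumes "nontriv_add_char (\<psi> :: 'a::{field,finite} \<Rightarrow> complex)"
  shows "norm (\<psi> x) = 1"
proof -
  obtain p where p: "p > 0" "(of_nat p :: 'a) = 0" using finite_char by blast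
  have "\<psi> x ^ p = 1" using chr_nat[OF assms, of p x] p chr_0[OF assms] by simp
  then have "norm (\<psi> x) ^ p = 1" by (metis norm_one norm_power)
  then show ?thesis using p
    by (metis \<open>\<psi> x ^ p = 1\<close> norm_power power_eq_imp_eq_norm power_one)
qed



lemma chr_cnj: assumes "nontriv_add_char (\<psi> :: 'a::{field,finite} \<Rightarrow> complex)"
  shows "cnj (\<psi> x) = \<psi> (- x)"
proof -
  have "\<psi> x * cnj (\<psi> x) = 1"
    using complex_norm_square[of "\<psi> x"] chr_norm[OF assms] by simp
  moreover have "\<psi> x * \<psi> (- x) = 1" using chr_neg[OF assms] by (simp add: mult.commute)
  ultimately show ?thesis using chr_nz[OF assms, of x]
    by (metis mult_left_cancel)
qed

lemma chr_orth: assumes "nontriv_add_char (\<psi> :: 'a::{field,finite} \<Rightarrow> complex)"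
  shows "(\<Sum>x\<in>UNIV. \<psi> x) = 0"
proof -
  obtain a where a: "\<psi> a \<noteq> 1" using assms unfolding nontriv_add_char_def by blast
  have "(\<Sum>x\<in>UNIV. \<psi> (a + x)) = (\<Sum>x\<in>UNIV. \<psi> x)"
    by (rule sum.reindex_bij_witness[of _ "\<lambda>x. x - a" "\<lambda>x. a + x"]) auto
  then have "\<psi> a * (\<Sum>x\<in>UNIV. \<psi> x) = (\<Sum>x\<in>UNIV. \<psi> x)"
    by (simp add: chr_add[OF assms] sum_distrib_left)
  then have "(\<psi> a - 1) * (\<Sum>x\<in>UNIV. \<psi> x) = 0" by (simp add: algebra_simps)
  then show ?thesis using a by simp
qed

lemma chr_orth_c: assumes "nontriv_add_char (\<psi> :: 'a::{field,finite} \<Rightarrow> complex)"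
  shows "(\<Sum>x\<in>UNIV. \<psi> (c * x)) = (if c = 0 then of_nat CARD('a) else 0)"
proof (cases "c = 0")
  case True then show ?thesis by (simp add: chr_0[OF assms])
next
  case False
  have "(\<Sum>x\<in>UNIV. \<psi> (c * x)) = (\<Sum>x\<in>UNIV. \<psi> x)"
    by (rule sum.reindex_bij_witness[of _ "\<lambda>x. x / c" "\<lambda>x. c * x"]) (use False in auto)
  then show ?thesis using chr_orth[OF assms] False by simp
qed

lemma indicator_chr: assumes "nontriv_add_char (\<psi> :: 'a::{field,finite} \<Rightarrow> complex)"
  shows "(if u = v then 1 else 0) = (\<Sum>s\<in>UNIV. \<psi> (s * (u - v))) / of_nat CARD('a)"
proof -
  have "(\<Sum>s\<in>UNIV. \<psi> (s * (u - v))) = (\<Sum>s\<in>UNIV. \<psi> ((u - v) * s))"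
    by (simp add: mult.commute)
  then show ?thesis using chr_orth_c[OF assms, of "u - v"] by simp
qed

lemma card_sqrt:
  assumes two: "(2::'a::{field,finite}) \<noteq> 0"
  shows "card {x::'a. x ^ 2 = u} = (if u = 0 then 1 else if (\<exists>y. y ^ 2 = u) then 2 else 0)"
proof -
  consider "u = 0" | "u \<noteq> 0" "\<exists>y. y ^ 2 = u" | "\<not> (\<exists>y. y ^ 2 = u)" by blast
  then show ?thesis
  proof cases
    case 1 then show ?thesis by simp
  next
    case 2
    then obtain y where y: "y ^ 2 = u" "y \<noteq> 0" by auto
    have "{x::'a. x ^ 2 = u} = {y, - y}"
      using y(1) by (auto simp: power2_eq_iff)
    moreover have "y \<noteq> - y"
    proof
      assume "y = - y" then have "2 * y = 0" by simp
      then show False using two y by simp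
    qed
    ultimately show ?thesis using 2 by simp
  next
    case 3 then show ?thesis by auto
  qed
qed

lemma card_sqrt_c:
  assumes two: "(2::'a::{field,finite}) \<noteq> 0"
  shows "of_nat (card {x::'a. x ^ 2 = u}) = 1 + qchar u"
  using card_sqrt[OF two, of u] by (simp add: qchar_def)

lemma card_squares:
  assumes two: "(2::'a::{field,finite}) \<noteq> 0"
  shows "card {u::'a. u \<noteq> 0} = 2 * card {u::'a. u \<noteq> 0 \<and> (\<exists>y. y ^ 2 = u)}"
proof -
  let ?S = "{u::'a. u \<noteq> 0 \<and> (\<exists>y. y ^ 2 = u)}"
  have im: "(\<lambda>x. x ^ 2) ` {u::'a. u \<noteq> 0} \<subseteq> ?S" by auto
  have "card {u::'a. u \<noteq> 0} = (\<Sum>u\<in>?S. card {x\<in>{u::'a. u \<noteq> 0}. x ^ 2 = u})"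
    using sum.group[OF _ _ im, of "\<lambda>_. 1::nat"] by simp
  also have "\<dots> = (\<Sum>u\<in>?S. 2)"
  proof (rule sum.cong)
    fix u assume "u \<in> ?S"
    then have "{x\<in>{u::'a. u \<noteq> 0}. x ^ 2 = u} = {x. x ^ 2 = u}" by auto
    then show "card {x\<in>{u::'a. u \<noteq> 0}. x ^ 2 = u} = 2" using card_sqrt[OF two, of u] \<open>u \<in> ?S\<close> by auto
  qed simp
  finally show ?thesis by simp
qed

lemma nonsq_mult:
  assumes two: "(2::'a::{field,finite}) \<noteq> 0"
    and a: "a \<noteq> 0" "\<not> (\<exists>y. y ^ 2 = a)" and b: "b \<noteq> 0" "\<not> (\<exists>y. y ^ 2 = b)"
  shows "\<exists>y. y ^ 2 = (a * b :: 'a)"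
proof -
  let ?S = "{u::'a. u \<noteq> 0 \<and> (\<exists>y. y ^ 2 = u)}"
  let ?N = "{u::'a. u \<noteq> 0 \<and> \<not> (\<exists>y. y ^ 2 = u)}"
  have "{u::'a. u \<noteq> 0} = ?S \<union> ?N" by auto
  then have "card {u::'a. u \<noteq> 0} = card ?S + card ?N"
    by (simp add: card_Un_disjoint disjoint_iff)
  then have cN: "card ?N = card ?S" using card_squares[OF two] by simp
  have sub: "(\<lambda>u. a * u) ` ?S \<subseteq> ?N"
  proof
    fix v assume "v \<in> (\<lambda>u. a * u) ` ?S"
    then obtain y where y: "y \<noteq> 0" "v = a * y ^ 2" by auto
    have "\<not> (\<exists>z. z ^ 2 = v)"
    proof
      assume "\<exists>z. z ^ 2 = v"
      then obtain z where "z ^ 2 = a * y ^ 2" using y by auto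
      then have "(z / y) ^ 2 = a" using y by (simp add: power_divide)
      then show False using a by blast
    qed
    then show "v \<in> ?N" using y a by auto
  qed
  have "inj_on (\<lambda>u. a * u) ?S" using a by (auto intro: inj_onI)
  then have "card ((\<lambda>u. a * u) ` ?S) = card ?N" using cN by (simp add: card_image)
  then have "(\<lambda>u. a * u) ` ?S = ?N" using sub by (intro card_subset_eq) auto
  then have "b \<in> (\<lambda>u. a * u) ` ?S" using b by auto
  then obtain y where "b = a * y ^ 2" by auto
  then have "a * b = (a * y) ^ 2" by (simp add: power2_eq_square)
  then show ?thesis by metis
qed

lemma qchar_mult:
  assumes two: "(2::'a::{field,finite}) \<noteq> 0"
  shows "qchar (a * b :: 'a) = qchar a * qchar b"
proof -
  consider "a = 0 \<or> b = 0" | "a \<noteq> 0" "b \<noteq> 0" by blast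
  then show ?thesis
  proof cases
    case 1 then show ?thesis by (auto simp: qchar_def)
  next
    case 2
    have sqsq: "\<exists>y. y ^ 2 = a * b" if "\<exists>y. y ^ 2 = a" "\<exists>y. y ^ 2 = b"
      using that by (metis power_mult_distrib)
    have sqn: "\<not> (\<exists>y. y ^ 2 = a * b)" if h1: "\<exists>y. y ^ 2 = a" and h2: "\<not> (\<exists>y. y ^ 2 = b)"
    proof
      assume "\<exists>y. y ^ 2 = a * b"
      then obtain z where z: "z ^ 2 = a * b" by auto
      obtain y where y: "y ^ 2 = a" using h1 by auto
      then have "y \<noteq> 0" using 2 by auto
      then have "(z / y) ^ 2 = b" using z y 2 by (simp add: power_divide)
      then show False using h2 by blast
    qed
    have nsq: "\<not> (\<exists>y. y ^ 2 = a * b)" if h1: "\<not> (\<exists>y. y ^ 2 = a)" and h2: "\<exists>y. y ^ 2 = b"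
    proof
      assume "\<exists>y. y ^ 2 = a * b"
      then obtain z where z: "z ^ 2 = a * b" by auto
      obtain y where y: "y ^ 2 = b" using h2 by auto
      then have "y \<noteq> 0" using 2 by auto
      then have "(z / y) ^ 2 = a" using z y 2 by (simp add: power_divide)
      then show False using h1 by blast
    qed
    show ?thesis using 2 sqsq sqn nsq nonsq_mult[OF two, of a b]
      by (auto simp: qchar_def)
  qed
qed

lemma qchar_sq: "t \<noteq> 0 \<Longrightarrow> qchar t ^ 2 = 1"
  by (simp add: qchar_def)

lemma qchar_inverse: "qchar (inverse t :: 'a::field) = qchar t"
proof -
  have "(\<exists>y. y ^ 2 = inverse t) \<longleftrightarrow> (\<exists>y::'a. y ^ 2 = t)"
    by (metis inverse_inverse_eq power_inverse)
  then show ?thesis by (simp add: qchar_def)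
qed




lemma gauss_quad:
  assumes chi: "nontriv_add_char (\<psi> :: 'a::{field,finite} \<Rightarrow> complex)"
    and two: "(2::'a) \<noteq> 0" and r: "r \<noteq> 0"
  shows "(\<Sum>x\<in>UNIV. \<psi> (r * x ^ 2)) = qchar r * gauss1 \<psi>"
proof -
  have im: "(\<lambda>x. x ^ 2) ` (UNIV::'a set) \<subseteq> UNIV" by simp
  have "(\<Sum>x\<in>UNIV. \<psi> (r * x ^ 2)) = (\<Sum>u\<in>UNIV. \<Sum>x\<in>{x\<in>UNIV. x ^ 2 = u}. \<psi> (r * x ^ 2))"
    using sum.group[OF _ _ im, of "\<lambda>x. \<psi> (r * x ^ 2)"] by simp
  also have "\<dots> = (\<Sum>u\<in>UNIV. (1 + qchar u) * \<psi> (r * u))"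
  proof (rule sum.cong)
    fix u :: 'a
    have "(\<Sum>x\<in>{x\<in>UNIV. x ^ 2 = u}. \<psi> (r * x ^ 2)) = (\<Sum>x\<in>{x. x ^ 2 = u}. \<psi> (r * u))"
      by (rule sum.cong) auto
    also have "\<dots> = of_nat (card {x. x ^ 2 = u}) * \<psi> (r * u)" by simp
    finally show "(\<Sum>x\<in>{x\<in>UNIV. x ^ 2 = u}. \<psi> (r * x ^ 2)) = (1 + qchar u) * \<psi> (r * u)"
      using card_sqrt_c[OF two, of u] by simp
  qed simp
  also have "\<dots> = (\<Sum>u\<in>UNIV. \<psi> (r * u)) + (\<Sum>u\<in>UNIV. qchar u * \<psi> (r * u))"
    by (simp add: distrib_right sum.distrib)
  also have "(\<Sum>u\<in>UNIV. \<psi> (r * u)) = 0" using chr_orth_c[OF chi, of r] r by simp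
  also have "(\<Sum>u\<in>UNIV. qchar u * \<psi> (r * u)) = (\<Sum>t\<in>UNIV. qchar (t / r) * \<psi> t)"
    by (rule sum.reindex_bij_witness[of _ "\<lambda>t. t / r" "\<lambda>u. r * u"]) (use r in auto)
  also have "\<dots> = qchar r * (\<Sum>t\<in>UNIV. qchar t * \<psi> t)"
    by (simp add: sum_distrib_left divide_inverse qchar_mult[OF two] qchar_inverse mult_ac)
  also have "(\<Sum>t\<in>UNIV. qchar t * \<psi> t) = gauss1 \<psi>"
    unfolding gauss1_def by (rule sum.mono_neutral_right) (auto simp: qchar_def)
  finally show ?thesis by simp
qed

lemma gauss_quad_lin:
  assumes chi: "nontriv_add_char (\<psi> :: 'a::{field,finite} \<Rightarrow> complex)"
    and two: "(2::'a) \<noteq> 0" and r: "r \<noteq> 0"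
  shows "(\<Sum>x\<in>UNIV. \<psi> (r * x ^ 2 + m * x)) = \<psi> (- (m ^ 2 / (4 * r))) * (qchar r * gauss1 \<psi>)"
proof -
  define c where "c = m / (2 * r)"
  have four: "(4::'a) \<noteq> 0" using two by (metis mult_2_right mult_eq_0_iff numeral_Bit0)
  have mc: "m = 2 * r * c" using two r by (simp add: c_def)
  have m2: "m ^ 2 = (4 * r) * (r * c ^ 2)" unfolding mc by (simp add: power2_eq_square algebra_simps)
  have "4 * r \<noteq> 0" using four r by simp
  then have q: "m ^ 2 / (4 * r) = r * c ^ 2" unfolding m2 by (rule nonzero_mult_div_cancel_left)
  have eq: "r * x ^ 2 + m * x = r * (x + c) ^ 2 + (- (m ^ 2 / (4 * r)))" for x
    unfolding q unfolding mc by (simp add: power2_eq_square algebra_simps)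
  have "(\<Sum>x\<in>UNIV. \<psi> (r * x ^ 2 + m * x)) = (\<Sum>x\<in>UNIV. \<psi> (r * (x + c) ^ 2)) * \<psi> (- (m ^ 2 / (4 * r)))"
    by (simp only: eq chr_add[OF chi] sum_distrib_right)
  also have "(\<Sum>x\<in>UNIV. \<psi> (r * (x + c) ^ 2)) = (\<Sum>x\<in>UNIV. \<psi> (r * x ^ 2))"
    by (rule sum.reindex_bij_witness[of _ "\<lambda>x. x - c" "\<lambda>x. x + c"]) auto
  finally show ?thesis using gauss_quad[OF chi two r] by (simp add: mult_ac)
qed

lemma sum_vec_prod:
  fixes f :: "'n::finite \<Rightarrow> 'a::finite \<Rightarrow> complex"
  shows "(\<Sum>x\<in>(UNIV :: ('a ^ 'n) set). \<Prod>i\<in>UNIV. f i (x $ i)) = (\<Prod>i\<in>UNIV. \<Sum>y\<in>UNIV. f i y)"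
proof -
  have "(\<Prod>i\<in>UNIV. \<Sum>y\<in>UNIV. f i y) = (\<Sum>g\<in>PiE UNIV (\<lambda>_. UNIV). \<Prod>i\<in>UNIV. f i (g i))"
    by (rule prod_sum_PiE) auto
  also have "PiE UNIV (\<lambda>_::'n. UNIV::'a set) = UNIV" by auto
  also have "(\<Sum>g\<in>UNIV. \<Prod>i\<in>UNIV. f i (g i)) = (\<Sum>x\<in>(UNIV :: ('a ^ 'n) set). \<Prod>i\<in>UNIV. f i (x $ i))"
    by (rule sum.reindex_bij_witness[of _ vec_nth vec_lambda]) auto
  finally show ?thesis by simp
qed

definition dotp :: "'a::field ^ 'n \<Rightarrow> 'a ^ 'n \<Rightarrow> 'a" where
  "dotp m x = (\<Sum>i\<in>UNIV. m $ i * x $ i)"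

lemma gauss_vec:
  assumes chi: "nontriv_add_char (\<psi> :: 'a::{field,finite} \<Rightarrow> complex)"
    and two: "(2::'a) \<noteq> 0" and r: "r \<noteq> 0"
  shows "(\<Sum>x\<in>(UNIV :: ('a ^ 'n::finite) set). \<psi> (r * sqn x + dotp m x))
     = (qchar r * gauss1 \<psi>) ^ CARD('n) * \<psi> (- (sqn m / (4 * r)))"
proof -
  have "(\<Sum>x\<in>(UNIV :: ('a ^ 'n) set). \<psi> (r * sqn x + dotp m x))
      = (\<Sum>x\<in>(UNIV :: ('a ^ 'n) set). \<Prod>i\<in>UNIV. \<psi> (r * (x $ i) ^ 2 + m $ i * x $ i))"
    by (simp add: sqn_def dotp_def sum_distrib_left sum.distrib[symmetric] chr_sum[OF chi])
  also have "\<dots> = (\<Prod>i\<in>UNIV. \<Sum>y\<in>UNIV. \<psi> (r * y ^ 2 + m $ i * y))"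
    by (rule sum_vec_prod)
  also have "\<dots> = (\<Prod>i\<in>UNIV. \<psi> (- ((m $ i) ^ 2 / (4 * r))) * (qchar r * gauss1 \<psi>))"
    by (simp add: gauss_quad_lin[OF chi two r])
  also have "\<dots> = (qchar r * gauss1 \<psi>) ^ CARD('n) * (\<Prod>i\<in>UNIV. \<psi> (- ((m $ i) ^ 2 / (4 * r))))"
    by (simp add: prod.distrib)
  also have "(\<Prod>i\<in>UNIV. \<psi> (- ((m $ i) ^ 2 / (4 * r)))) = \<psi> (- (sqn m / (4 * r)))"
    by (simp add: chr_sum[OF chi, symmetric] sqn_def sum_negf sum_divide_distrib)
  finally show ?thesis .
qed

lemma orth_vec:
  assumes chi: "nontriv_add_char (\<psi> :: 'a::{field,finite} \<Rightarrow> complex)"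
  shows "(\<Sum>x\<in>(UNIV :: ('a ^ 'n::finite) set). \<psi> (dotp m x))
     = (if m = 0 then of_nat CARD('a) ^ CARD('n) else 0)"
proof -
  have "(\<Sum>x\<in>(UNIV :: ('a ^ 'n) set). \<psi> (dotp m x))
      = (\<Sum>x\<in>(UNIV :: ('a ^ 'n) set). \<Prod>i\<in>UNIV. \<psi> (m $ i * x $ i))"
    by (simp add: dotp_def chr_sum[OF chi])
  also have "\<dots> = (\<Prod>i\<in>UNIV. \<Sum>y\<in>UNIV. \<psi> (m $ i * y))"
    by (rule sum_vec_prod)
  also have "\<dots> = (\<Prod>i\<in>UNIV. if m $ i = 0 then of_nat CARD('a) else 0)"
    by (simp add: chr_orth_c[OF chi])
  also have "\<dots> = (if m = 0 then of_nat CARD('a) ^ CARD('n) else 0)"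
  proof (cases "m = 0")
    case False
    then obtain i where "m $ i \<noteq> 0" by (metis vec_eq_iff zero_index)
    then show ?thesis using False by (intro trans[OF prod_zero]) auto
  qed simp
  finally show ?thesis .
qed




lemma sphere_sum:
  assumes chi: "nontriv_add_char (\<psi> :: 'a::{field,finite} \<Rightarrow> complex)"
    and two: "(2::'a) \<noteq> 0"
  shows "(\<Sum>a\<in>{x::'a ^ 'n::finite. sqn x = j}. \<psi> (dotp m a))
    = ((if m = 0 then of_nat CARD('a) ^ CARD('n) else 0)
       + (\<Sum>r\<in>{r::'a. r \<noteq> 0}. \<psi> (- (r * j)) * ((qchar r * gauss1 \<psi>) ^ CARD('n) * \<psi> (- (sqn m / (4 * r))))))
      / of_nat CARD('a)"
proof -
  let ?q = "of_nat CARD('a) :: complex"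
  let ?F = "\<lambda>r. (\<Sum>a\<in>(UNIV :: ('a ^ 'n) set). \<psi> (r * (sqn a - j)) * \<psi> (dotp m a))"
  have "(\<Sum>a\<in>{x::'a ^ 'n. sqn x = j}. \<psi> (dotp m a))
      = (\<Sum>a\<in>UNIV. (if sqn a = j then 1 else 0) * \<psi> (dotp m a))"
  proof -
    have "(\<Sum>a\<in>UNIV. (if sqn a = j then 1 else 0) * \<psi> (dotp m a))
       = (\<Sum>a\<in>UNIV. if sqn a = j then \<psi> (dotp m a) else 0)" by (rule sum.cong) auto
    also have "\<dots> = (\<Sum>a\<in>{a\<in>UNIV. sqn a = j}. \<psi> (dotp m a))"
      by (rule sum.inter_filter[symmetric]) simp
    finally show ?thesis by simp
  qed
  also have "\<dots> = (\<Sum>a\<in>UNIV. (\<Sum>r\<in>UNIV. \<psi> (r * (sqn a - j))) / ?q * \<psi> (dotp m a))"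
    by (simp add: indicator_chr[OF chi])
  also have "\<dots> = (\<Sum>a\<in>UNIV. \<Sum>r\<in>UNIV. \<psi> (r * (sqn a - j)) * \<psi> (dotp m a)) / ?q"
    by (simp add: sum_divide_distrib sum_distrib_right)
  also have "\<dots> = (\<Sum>r\<in>UNIV. ?F r) / ?q"
    by (subst sum.swap) (rule refl)
  also have "(\<Sum>r\<in>UNIV. ?F r) = ?F 0 + (\<Sum>r\<in>{r::'a. r \<noteq> 0}. ?F r)"
  proof -
    have U: "(UNIV :: 'a set) = insert 0 {r. r \<noteq> 0}" by auto
    show ?thesis unfolding U by (rule sum.insert) auto
  qed
  also have "?F 0 = (if m = 0 then ?q ^ CARD('n) else 0)"
    using orth_vec[OF chi, of m] by (simp add: chr_0[OF chi])
  also have "(\<Sum>r\<in>{r::'a. r \<noteq> 0}. ?F r) = (\<Sum>r\<in>{r::'a. r \<noteq> 0}. \<psi> (- (r * j)) * ((qchar r * gauss1 \<psi>) ^ CARD('n) * \<psi> (- (sqn m / (4 * r)))))"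
  proof (rule sum.cong)
    fix r :: 'a assume r: "r \<in> {r. r \<noteq> 0}"
    have "?F r = (\<Sum>a\<in>(UNIV :: ('a ^ 'n) set). \<psi> (- (r * j)) * \<psi> (r * sqn a + dotp m a))"
    proof (rule sum.cong)
      fix a :: "'a ^ 'n"
      have "r * (sqn a - j) + dotp m a = - (r * j) + (r * sqn a + dotp m a)" by (simp add: algebra_simps)
      then show "\<psi> (r * (sqn a - j)) * \<psi> (dotp m a) = \<psi> (- (r * j)) * \<psi> (r * sqn a + dotp m a)"
        by (metis chr_add[OF chi])
    qed simp
    also have "\<dots> = \<psi> (- (r * j)) * ((qchar r * gauss1 \<psi>) ^ CARD('n) * \<psi> (- (sqn m / (4 * r))))"
      using gauss_vec[OF chi two, of r m] r by (simp add: sum_distrib_left[symmetric])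
    finally show "?F r = \<psi> (- (r * j)) * ((qchar r * gauss1 \<psi>) ^ CARD('n) * \<psi> (- (sqn m / (4 * r))))" .
  qed simp
  finally show ?thesis by simp
qed

lemma sqn_scale: "sqn (c *s v) = c ^ 2 * sqn (v :: 'a::field ^ 'n::finite)"
  by (simp add: sqn_def sum_distrib_left power_mult_distrib)

lemma sqn_minus_commute: "sqn (a - b) = sqn (b - a :: 'a::field ^ 'n::finite)"
  unfolding sqn_def by (rule sum.cong) (auto simp: power2_commute)

lemma r_reindex:
  assumes chi: "nontriv_add_char (\<psi> :: 'a::{field,finite} \<Rightarrow> complex)"
    and two: "(2::'a) \<noteq> 0"
  shows "(\<Sum>r\<in>{r::'a. r \<noteq> 0}. \<psi> (- (r * j)) * ((qchar r * G) ^ d * \<psi> (- (X / r))))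
    = qchar (- 1 :: 'a) ^ d * G ^ d * (\<Sum>r\<in>{r::'a. r \<noteq> 0}. qchar r ^ d * \<psi> (j * r + X / r))"
proof -
  have "(\<Sum>r\<in>{r::'a. r \<noteq> 0}. qchar r ^ d * \<psi> (j * r + X / r))
      = (\<Sum>r\<in>{r::'a. r \<noteq> 0}. qchar (- r) ^ d * \<psi> (j * (- r) + X / (- r)))"
    by (rule sum.reindex_bij_witness[of _ uminus uminus]) auto
  also have "\<dots> = (\<Sum>r\<in>{r::'a. r \<noteq> 0}. qchar (- 1 :: 'a) ^ d * (qchar r ^ d * \<psi> (- (r * j) + - (X / r))))"
  proof (rule sum.cong)
    fix r :: 'a
    have "qchar (- r) = qchar (- 1 :: 'a) * qchar r" using qchar_mult[OF two, of "-1" r] by simp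
    then show "qchar (- r) ^ d * \<psi> (j * (- r) + X / (- r)) = qchar (- 1 :: 'a) ^ d * (qchar r ^ d * \<psi> (- (r * j) + - (X / r)))"
      by (simp add: power_mult_distrib mult_ac)
  qed simp
  finally have e: "(\<Sum>r\<in>{r::'a. r \<noteq> 0}. qchar r ^ d * \<psi> (j * r + X / r))
      = qchar (- 1 :: 'a) ^ d * (\<Sum>r\<in>{r::'a. r \<noteq> 0}. qchar r ^ d * \<psi> (- (r * j) + - (X / r)))"
    by (simp add: sum_distrib_left)
  have m1: "qchar (- 1 :: 'a) ^ d * qchar (- 1 :: 'a) ^ d = 1"
    using qchar_sq[of "- 1 :: 'a"] by (simp add: power_mult_distrib[symmetric] power2_eq_square)
  have "(\<Sum>r\<in>{r::'a. r \<noteq> 0}. \<psi> (- (r * j)) * ((qchar r * G) ^ d * \<psi> (- (X / r))))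
     = (\<Sum>r\<in>{r::'a. r \<noteq> 0}. G ^ d * (qchar r ^ d * \<psi> (- (r * j) + - (X / r))))"
    by (rule sum.cong, simp, subst chr_add[OF chi], simp add: power_mult_distrib mult_ac)
  also have "\<dots> = (qchar (- 1 :: 'a) ^ d * qchar (- 1 :: 'a) ^ d) * G ^ d * (\<Sum>r\<in>{r::'a. r \<noteq> 0}. qchar r ^ d * \<psi> (- (r * j) + - (X / r)))"
    unfolding m1 by (simp add: sum_distrib_left)
  finally show ?thesis unfolding e by (simp only: mult_ac)
qed




lemma scale_eq_0: "c \<noteq> 0 \<Longrightarrow> (c *s v = 0) \<longleftrightarrow> v = (0 :: 'a::field ^ 'n)"
  by (auto simp: vec_eq_iff)

lemma pair_term:
  assumes chi: "nontriv_add_char (\<psi> :: 'a::{field,finite} \<Rightarrow> complex)"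
    and two: "(2::'a) \<noteq> 0" and s: "s \<noteq> 0"
  shows "\<psi> (s * (sqn b - sqn b')) * (\<Sum>a\<in>{x::'a ^ 'n::finite. sqn x = j}. \<psi> (dotp ((2 * s) *s (b' - b)) a))
   = (if b = b' then of_nat CARD('a) ^ CARD('n) / of_nat CARD('a) else 0)
     + qchar (- 1 :: 'a) ^ CARD('n) * gauss1 \<psi> ^ CARD('n) / of_nat CARD('a)
       * (\<Sum>r\<in>{r::'a. r \<noteq> 0}. qchar r ^ CARD('n) * \<psi> (j * r + s ^ 2 * sqn (b' - b) / r) * \<psi> (s * (sqn b - sqn b')))"
proof -
  let ?M = "(2 * s) *s (b' - b)"
  let ?q = "of_nat CARD('a) :: complex"
  have four: "(4::'a) \<noteq> 0" using two by (metis mult_2_right mult_eq_0_iff numeral_Bit0)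
  have M0: "?M = 0 \<longleftrightarrow> b = b'" using two s by (auto simp: scale_eq_0)
  have sM: "sqn ?M / (4 * r) = s ^ 2 * sqn (b' - b) / r" for r
  proof -
    have "sqn ?M = 4 * (s ^ 2 * sqn (b' - b))" unfolding sqn_scale by (simp add: power_mult_distrib)
    then show ?thesis using four by simp
  qed
  have "(\<Sum>a\<in>{x::'a ^ 'n. sqn x = j}. \<psi> (dotp ?M a))
     = ((if b = b' then ?q ^ CARD('n) else 0)
       + qchar (- 1 :: 'a) ^ CARD('n) * gauss1 \<psi> ^ CARD('n) * (\<Sum>r\<in>{r::'a. r \<noteq> 0}. qchar r ^ CARD('n) * \<psi> (j * r + s ^ 2 * sqn (b' - b) / r))) / ?q"
    unfolding sphere_sum[OF chi two] M0 sM r_reindex[OF chi two] ..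
  then show ?thesis
    by (auto simp: chr_0[OF chi] add_divide_distrib sum_distrib_left sum_distrib_right sum_divide_distrib mult_ac)
qed

lemma expand_sq:
  fixes a b b' :: "'a::field ^ 'n::finite"
  shows "s * sqn (a - b) + - (s * sqn (a - b')) = s * (sqn b - sqn b') + dotp ((2 * s) *s (b' - b)) a"
proof -
  have "s * sqn (a - b) + - (s * sqn (a - b')) = (\<Sum>i\<in>UNIV. s * (a $ i - b $ i) ^ 2 - s * (a $ i - b' $ i) ^ 2)"
    by (simp add: sqn_def sum_distrib_left sum_subtractf)
  also have "\<dots> = (\<Sum>i\<in>UNIV. (s * (b $ i) ^ 2 - s * (b' $ i) ^ 2) + (2 * s) * (b' $ i - b $ i) * a $ i)"
    by (rule sum.cong) (simp_all add: power2_eq_square algebra_simps)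
  also have "\<dots> = s * (sqn b - sqn b') + dotp ((2 * s) *s (b' - b)) a"
    by (simp add: sqn_def dotp_def sum_distrib_left sum_subtractf sum.distrib right_diff_distrib left_diff_distrib mult.assoc)
  finally show ?thesis .
qed




lemma key:
  assumes chi: "nontriv_add_char (\<psi> :: 'a::{field,finite} \<Rightarrow> complex)"
    and two: "(2::'a) \<noteq> 0" and s: "s \<noteq> 0"
  shows "(\<Sum>a\<in>{x::'a ^ 'n::finite. sqn x = j}. (\<Sum>b\<in>B. \<psi> (s * sqn (a - b))) * cnj (\<Sum>b\<in>B. \<psi> (s * sqn (a - b))))
   = of_nat (card B) * (of_nat CARD('a) ^ CARD('n) / of_nat CARD('a))
     + qchar (- 1 :: 'a) ^ CARD('n) * gauss1 \<psi> ^ CARD('n) / of_nat CARD('a)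
       * (\<Sum>b\<in>B. \<Sum>b'\<in>B. \<Sum>r\<in>{r::'a. r \<noteq> 0}. qchar r ^ CARD('n) * \<psi> (j * r + s ^ 2 * sqn (b' - b) / r) * \<psi> (s * (sqn b' - sqn b)))"
proof -
  let ?S = "{x::'a ^ 'n. sqn x = j}"
  let ?M = "\<lambda>b b'. (2 * s) *s (b' - b)"
  let ?c = "\<lambda>b b'. \<psi> (s * (sqn b - sqn b'))"
  let ?Q = "of_nat CARD('a) ^ CARD('n) / of_nat CARD('a) :: complex"
  let ?C = "qchar (- 1 :: 'a) ^ CARD('n) * gauss1 \<psi> ^ CARD('n) / of_nat CARD('a)"
  let ?R = "\<lambda>b b'. (\<Sum>r\<in>{r::'a. r \<noteq> 0}. qchar r ^ CARD('n) * \<psi> (j * r + s ^ 2 * sqn (b' - b) / r) * \<psi> (s * (sqn b - sqn b')))"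
  have pt: "(\<Sum>b\<in>B. \<psi> (s * sqn (a - b))) * cnj (\<Sum>b\<in>B. \<psi> (s * sqn (a - b)))
      = (\<Sum>b\<in>B. \<Sum>b'\<in>B. ?c b b' * \<psi> (dotp (?M b b') a))" for a
  proof -
    have "(\<Sum>b\<in>B. \<psi> (s * sqn (a - b))) * cnj (\<Sum>b\<in>B. \<psi> (s * sqn (a - b)))
        = (\<Sum>b\<in>B. \<psi> (s * sqn (a - b))) * (\<Sum>b'\<in>B. \<psi> (- (s * sqn (a - b'))))"
      by (simp add: cnj_sum chr_cnj[OF chi])
    also have "\<dots> = (\<Sum>b\<in>B. \<Sum>b'\<in>B. \<psi> (s * sqn (a - b)) * \<psi> (- (s * sqn (a - b'))))"
      by (rule sum_product)
    also have "\<dots> = (\<Sum>b\<in>B. \<Sum>b'\<in>B. ?c b b' * \<psi> (dotp (?M b b') a))"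
      by (intro sum.cong refl) (metis chr_add[OF chi] expand_sq)
    finally show ?thesis .
  qed
  have "(\<Sum>a\<in>?S. (\<Sum>b\<in>B. \<psi> (s * sqn (a - b))) * cnj (\<Sum>b\<in>B. \<psi> (s * sqn (a - b))))
      = (\<Sum>a\<in>?S. \<Sum>b\<in>B. \<Sum>b'\<in>B. ?c b b' * \<psi> (dotp (?M b b') a))"
    by (simp only: pt)
  also have "\<dots> = (\<Sum>b\<in>B. \<Sum>a\<in>?S. \<Sum>b'\<in>B. ?c b b' * \<psi> (dotp (?M b b') a))"
    by (rule sum.swap)
  also have "\<dots> = (\<Sum>b\<in>B. \<Sum>b'\<in>B. \<Sum>a\<in>?S. ?c b b' * \<psi> (dotp (?M b b') a))"
    by (rule sum.cong[OF refl], rule sum.swap)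
  also have "\<dots> = (\<Sum>b\<in>B. \<Sum>b'\<in>B. ?c b b' * (\<Sum>a\<in>?S. \<psi> (dotp (?M b b') a)))"
    by (simp only: sum_distrib_left)
  also have "\<dots> = (\<Sum>b\<in>B. \<Sum>b'\<in>B. (if b = b' then ?Q else 0) + ?C * ?R b b')"
    by (intro sum.cong refl) (rule pair_term[OF chi two s])
  also have "\<dots> = (\<Sum>b\<in>B. \<Sum>b'\<in>B. (if b = b' then ?Q else 0)) + ?C * (\<Sum>b\<in>B. \<Sum>b'\<in>B. ?R b b')"
    by (simp only: sum.distrib sum_distrib_left)
  also have "(\<Sum>b\<in>B. \<Sum>b'\<in>B. (if b = b' then ?Q else 0)) = of_nat (card B) * ?Q"
    by simp
  also have "(\<Sum>b\<in>B. \<Sum>b'\<in>B. ?R b b') = (\<Sum>b'\<in>B. \<Sum>b\<in>B. ?R b b')"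
    by (rule sum.swap)
  also have "\<dots> = (\<Sum>b\<in>B. \<Sum>b'\<in>B. \<Sum>r\<in>{r::'a. r \<noteq> 0}. qchar r ^ CARD('n) * \<psi> (j * r + s ^ 2 * sqn (b' - b) / r) * \<psi> (s * (sqn b' - sqn b)))"
    by (intro sum.cong refl) (simp add: sqn_minus_commute)
  finally show ?thesis .
qed




lemma card_filter_sum:
  "finite X \<Longrightarrow> (of_nat (card {x\<in>X. P x}) :: complex) = (\<Sum>x\<in>X. if P x then 1 else 0)"
  by (simp add: sum.inter_filter[symmetric])

lemma sumsq_indicator:
  fixes f :: "'p \<Rightarrow> 'a::finite"
  assumes "finite P"
  shows "(\<Sum>t\<in>UNIV. (of_nat (card {p\<in>P. f p = t}) :: complex) ^ 2)
       = (\<Sum>p\<in>P. \<Sum>p'\<in>P. if f p = f p' then 1 else 0)"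
proof -
  have "(\<Sum>t\<in>UNIV. (of_nat (card {p\<in>P. f p = t}) :: complex) ^ 2)
      = (\<Sum>t\<in>UNIV. \<Sum>p\<in>P. \<Sum>p'\<in>P. (if f p = t then 1 else 0) * (if f p' = t then 1 else 0))"
    by (simp only: card_filter_sum[OF assms] power2_eq_square sum_product)
  also have "\<dots> = (\<Sum>p\<in>P. \<Sum>t\<in>UNIV. \<Sum>p'\<in>P. (if f p = t then 1 else 0) * (if f p' = t then 1 else 0))"
    by (rule sum.swap)
  also have "\<dots> = (\<Sum>p\<in>P. \<Sum>p'\<in>P. \<Sum>t\<in>UNIV. (if f p = t then 1 else 0) * (if f p' = t then 1 else 0))"
    by (rule sum.cong[OF refl], rule sum.swap)
  also have "\<dots> = (\<Sum>p\<in>P. \<Sum>p'\<in>P. if f p = f p' then 1 else 0)"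
  proof (rule sum.cong[OF refl], rule sum.cong[OF refl])
    fix p p'
    have "(\<Sum>t\<in>UNIV. (if f p = t then 1 else 0) * (if f p' = t then 1 else 0))
        = (\<Sum>t\<in>UNIV. if f p = t then (if f p' = t then 1 else 0) else (0::complex))"
      by (rule sum.cong) auto
    also have "\<dots> = (if f p = f p' then 1 else 0)" by (simp add: sum.delta')
    finally show "(\<Sum>t\<in>UNIV. (if f p = t then 1 else 0) * (if f p' = t then 1 else 0))
        = (if f p = f p' then 1 else (0::complex))" .
  qed
  finally show ?thesis .
qed

lemma sum_norm_sq:
  assumes chi: "nontriv_add_char (\<psi> :: 'a::{field,finite} \<Rightarrow> complex)"
    and fin: "finite P"
  shows "(\<Sum>p\<in>P. \<Sum>p'\<in>P. if f p = f p' then 1 else 0)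
       = complex_of_real ((\<Sum>s\<in>UNIV. (cmod (\<Sum>p\<in>P. \<psi> (s * f p))) ^ 2) / real CARD('a))"
proof -
  let ?q = "of_nat CARD('a) :: complex"
  have "(\<Sum>p\<in>P. \<Sum>p'\<in>P. if f p = f p' then 1 else 0)
      = (\<Sum>p\<in>P. \<Sum>p'\<in>P. (\<Sum>s\<in>UNIV. \<psi> (s * (f p - f p'))) / ?q)"
    by (simp only: indicator_chr[OF chi])
  also have "\<dots> = (\<Sum>p\<in>P. \<Sum>p'\<in>P. \<Sum>s\<in>UNIV. \<psi> (s * (f p - f p'))) / ?q"
    by (simp only: sum_divide_distrib)
  also have "(\<Sum>p\<in>P. \<Sum>p'\<in>P. \<Sum>s\<in>UNIV. \<psi> (s * (f p - f p'))) = (\<Sum>p\<in>P. \<Sum>s\<in>UNIV. \<Sum>p'\<in>P. \<psi> (s * (f p - f p')))"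
    by (rule sum.cong[OF refl], rule sum.swap)
  also have "\<dots> = (\<Sum>s\<in>UNIV. \<Sum>p\<in>P. \<Sum>p'\<in>P. \<psi> (s * (f p - f p')))"
    by (rule sum.swap)
  also have "\<dots> = (\<Sum>s\<in>UNIV. complex_of_real ((cmod (\<Sum>p\<in>P. \<psi> (s * f p))) ^ 2))"
  proof (rule sum.cong[OF refl])
    fix s
    have "complex_of_real ((cmod (\<Sum>p\<in>P. \<psi> (s * f p))) ^ 2) = (\<Sum>p\<in>P. \<psi> (s * f p)) * cnj (\<Sum>p\<in>P. \<psi> (s * f p))"
      by (rule complex_norm_square)
    also have "\<dots> = (\<Sum>p\<in>P. \<psi> (s * f p)) * (\<Sum>p'\<in>P. \<psi> (- (s * f p')))"
      by (simp add: cnj_sum chr_cnj[OF chi])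
    also have "\<dots> = (\<Sum>p\<in>P. \<Sum>p'\<in>P. \<psi> (s * f p) * \<psi> (- (s * f p')))"
      by (rule sum_product)
    also have "\<dots> = (\<Sum>p\<in>P. \<Sum>p'\<in>P. \<psi> (s * (f p - f p')))"
      by (intro sum.cong refl) (simp add: chr_add[OF chi, symmetric] right_diff_distrib)
    finally show "(\<Sum>p\<in>P. \<Sum>p'\<in>P. \<psi> (s * (f p - f p'))) = complex_of_real ((cmod (\<Sum>p\<in>P. \<psi> (s * f p))) ^ 2)" by simp
  qed
  finally show ?thesis by simp
qed




theorem lemma6p4:
  fixes \<psi> :: "'a::{field,finite} \<Rightarrow> complex"
    and j :: 'a
    and A B :: "('a ^ 'n) set"
  assumes odd_char: "(2::'a) \<noteq> 0"
    and chi: "nontriv_add_char \<psi>"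
    and A_sphere: "A \<subseteq> {x. sqn x = j}"
  defines "\<mu> \<equiv> \<lambda>t::'a. card {(a, b). a \<in> A \<and> b \<in> B \<and> sqn (a - b) = t}"
    and "q \<equiv> CARD('a)"
    and "d \<equiv> CARD('n)"
  shows "(let R = of_nat (card A ^ 2 * card B ^ 2) / of_nat q
              + of_nat (q ^ (d - 1) * card A * card B)
              + (qchar (-1::'a)) ^ d * (gauss1 \<psi>) ^ d * of_nat (card A) / of_nat (q ^ 2)
                * (\<Sum>b\<in>B. \<Sum>b'\<in>B. \<Sum>s\<in>{s::'a. s \<noteq> 0}. \<Sum>r\<in>{r::'a. r \<noteq> 0}.
                     (qchar r) ^ d * \<psi> (j * r + s ^ 2 * sqn (b' - b) / r)
                       * \<psi> (s * (sqn b' - sqn b)))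
         in R \<in> \<real> \<and> real (\<Sum>t\<in>UNIV. (\<mu> t) ^ 2) \<le> Re R)"
proof -
  let ?S = "{x::'a ^ 'n. sqn x = j}"
  let ?f = "\<lambda>p::('a ^ 'n) \<times> ('a ^ 'n). sqn (fst p - snd p)"
  define S where "S s = (\<Sum>p\<in>A \<times> B. \<psi> (s * ?f p))" for s
  define T where "T a s = (\<Sum>b\<in>B. \<psi> (s * sqn (a - b)))" for a s
  define W where "W s = (\<Sum>a\<in>?S. (cmod (T a s)) ^ 2)" for s
  define K where "K s = (\<Sum>b\<in>B. \<Sum>b'\<in>B. \<Sum>r\<in>{r::'a. r \<noteq> 0}. qchar r ^ d * \<psi> (j * r + s ^ 2 * sqn (b' - b) / r) * \<psi> (s * (sqn b' - sqn b)))" for s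
  define Cc where "Cc = qchar (- 1 :: 'a) ^ d * gauss1 \<psi> ^ d"
  define N where "N = card {s::'a. s \<noteq> 0}"
  define Qd where "Qd = real q ^ (d - 1)"
  have d1: "d \<ge> 1" unfolding d_def by (simp add: Suc_le_eq)
  have q0: "q > 0" unfolding q_def by simp
  have qd: "(of_nat q ^ d / of_nat q :: complex) = of_real Qd"
  proof -
    have "(of_nat q ^ d / of_nat q :: complex) = of_nat q ^ (d - 1)"
      using q0 d1 by (simp add: power_diff)
    then show ?thesis unfolding Qd_def by simp
  qed
  have Nq: "N \<le> q" unfolding N_def q_def by (rule card_mono) auto
  have A1: "real (\<Sum>t\<in>UNIV. (\<mu> t) ^ 2) = (\<Sum>s\<in>UNIV. (cmod (S s)) ^ 2) / real q"
  proof -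
    have mu: "\<mu> t = card {p\<in>A \<times> B. ?f p = t}" for t
      unfolding \<mu>_def by (rule arg_cong[where f = card]) auto
    have "complex_of_real (real (\<Sum>t\<in>UNIV. (\<mu> t) ^ 2)) = (\<Sum>t\<in>UNIV. (of_nat (card {p\<in>A \<times> B. ?f p = t}) :: complex) ^ 2)"
      by (simp add: mu)
    also have "\<dots> = complex_of_real ((\<Sum>s\<in>UNIV. (cmod (S s)) ^ 2) / real q)"
      unfolding sumsq_indicator[OF finite] sum_norm_sq[OF chi finite] S_def q_def ..
    finally show ?thesis by (simp only: of_real_eq_iff)
  qed
  have B1: "(cmod (S s)) ^ 2 \<le> real (card A) * W s" for s
  proof -
    have "S s = (\<Sum>a\<in>A. T a s)"
      unfolding S_def T_def by (simp add: sum.cartesian_product split_def)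
    then have "cmod (S s) \<le> (\<Sum>a\<in>A. cmod (T a s))" by (simp add: norm_sum)
    then have "(cmod (S s)) ^ 2 \<le> (\<Sum>a\<in>A. cmod (T a s)) ^ 2"
      by (rule power_mono) simp
    also have "\<dots> \<le> (\<Sum>a\<in>A. (cmod (T a s)) ^ 2) * real (card A)"
      by (rule sum_squared_le_sum_of_squares)
    also have "(\<Sum>a\<in>A. (cmod (T a s)) ^ 2) \<le> W s"
      unfolding W_def by (rule sum_mono2) (use A_sphere in auto)
    finally show ?thesis by (simp add: mult.commute mult_right_mono)
  qed
  have C1: "(cmod (S 0)) ^ 2 = real (card A * card B) ^ 2"
    unfolding S_def by (simp add: chr_0[OF chi] card_cartesian_product norm_mult)
  have D1: "(\<Sum>s\<in>UNIV. (cmod (S s)) ^ 2) = (cmod (S 0)) ^ 2 + (\<Sum>s\<in>{s::'a. s \<noteq> 0}. (cmod (S s)) ^ 2)"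
  proof -
    have U: "(UNIV :: 'a set) = insert 0 {r. r \<noteq> 0}" by auto
    show ?thesis unfolding U by (rule sum.insert) auto
  qed
  have E1: "complex_of_real (W s) = of_nat (card B) * of_real Qd + Cc / of_nat q * K s" if s: "s \<noteq> 0" for s
  proof -
    have "complex_of_real (W s) = (\<Sum>a\<in>?S. T a s * cnj (T a s))"
      unfolding W_def of_real_sum by (simp only: complex_norm_square)
    also have "\<dots> = of_nat (card B) * (of_nat q ^ d / of_nat q) + Cc / of_nat q * K s"
      unfolding T_def K_def Cc_def q_def d_def by (rule key[OF chi odd_char s])
    finally show ?thesis by (simp add: qd)
  qed
  define X where "X = real (card A ^ 2 * card B ^ 2) / real q + real (q ^ (d - 1) * card A * card B)
     + real (card A) / real q * ((\<Sum>s\<in>{s::'a. s \<noteq> 0}. W s) - real N * real (card B) * Qd)"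
  have sum4: "(\<Sum>b\<in>B. \<Sum>b'\<in>B. \<Sum>s\<in>{s::'a. s \<noteq> 0}. \<Sum>r\<in>{r::'a. r \<noteq> 0}.
                     (qchar r) ^ d * \<psi> (j * r + s ^ 2 * sqn (b' - b) / r) * \<psi> (s * (sqn b' - sqn b)))
        = (\<Sum>s\<in>{s::'a. s \<noteq> 0}. K s)"
  proof -
    have "(\<Sum>b\<in>B. \<Sum>b'\<in>B. \<Sum>s\<in>{s::'a. s \<noteq> 0}. \<Sum>r\<in>{r::'a. r \<noteq> 0}.
                     (qchar r) ^ d * \<psi> (j * r + s ^ 2 * sqn (b' - b) / r) * \<psi> (s * (sqn b' - sqn b)))
       = (\<Sum>b\<in>B. \<Sum>s\<in>{s::'a. s \<noteq> 0}. \<Sum>b'\<in>B. \<Sum>r\<in>{r::'a. r \<noteq> 0}.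
                     (qchar r) ^ d * \<psi> (j * r + s ^ 2 * sqn (b' - b) / r) * \<psi> (s * (sqn b' - sqn b)))"
      by (rule sum.cong[OF refl], rule sum.swap)
    also have "\<dots> = (\<Sum>s\<in>{s::'a. s \<noteq> 0}. K s)"
      unfolding K_def by (rule sum.swap)
    finally show ?thesis .
  qed
  have CK: "Cc / of_nat q * (\<Sum>s\<in>{s::'a. s \<noteq> 0}. K s)
      = complex_of_real ((\<Sum>s\<in>{s::'a. s \<noteq> 0}. W s) - real N * real (card B) * Qd)"
  proof -
    have "Cc / of_nat q * (\<Sum>s\<in>{s::'a. s \<noteq> 0}. K s) = (\<Sum>s\<in>{s::'a. s \<noteq> 0}. Cc / of_nat q * K s)"
      by (simp add: sum_distrib_left)
    also have "\<dots> = (\<Sum>s\<in>{s::'a. s \<noteq> 0}. complex_of_real (W s) - of_nat (card B) * of_real Qd)"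
      by (rule sum.cong[OF refl]) (simp add: E1)
    also have "\<dots> = complex_of_real ((\<Sum>s\<in>{s::'a. s \<noteq> 0}. W s) - real N * real (card B) * Qd)"
      by (simp add: sum_subtractf N_def)
    finally show ?thesis .
  qed
  have RX: "of_nat (card A ^ 2 * card B ^ 2) / of_nat q
              + of_nat (q ^ (d - 1) * card A * card B)
              + (qchar (-1::'a)) ^ d * (gauss1 \<psi>) ^ d * of_nat (card A) / of_nat (q ^ 2)
                * (\<Sum>b\<in>B. \<Sum>b'\<in>B. \<Sum>s\<in>{s::'a. s \<noteq> 0}. \<Sum>r\<in>{r::'a. r \<noteq> 0}.
                     (qchar r) ^ d * \<psi> (j * r + s ^ 2 * sqn (b' - b) / r)
                       * \<psi> (s * (sqn b' - sqn b)))
        = complex_of_real X"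
  proof -
    have "(qchar (-1::'a)) ^ d * (gauss1 \<psi>) ^ d * of_nat (card A) / of_nat (q ^ 2)
                * (\<Sum>s\<in>{s::'a. s \<noteq> 0}. K s)
        = of_nat (card A) / of_nat q * (Cc / of_nat q * (\<Sum>s\<in>{s::'a. s \<noteq> 0}. K s))"
      unfolding Cc_def by (simp add: power2_eq_square)
    then show ?thesis unfolding sum4 CK X_def by simp
  qed
  have ineq: "real (\<Sum>t\<in>UNIV. (\<mu> t) ^ 2) \<le> X"
  proof -
    have "(\<Sum>s\<in>{s::'a. s \<noteq> 0}. (cmod (S s)) ^ 2) \<le> (\<Sum>s\<in>{s::'a. s \<noteq> 0}. real (card A) * W s)"
      by (rule sum_mono) (rule B1)
    then have "real (\<Sum>t\<in>UNIV. (\<mu> t) ^ 2) \<le> (real (card A * card B) ^ 2 + real (card A) * (\<Sum>s\<in>{s::'a. s \<noteq> 0}. W s)) / real q"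
      unfolding A1 D1 C1 using q0 by (simp add: divide_right_mono sum_distrib_left)
    also have "\<dots> \<le> X"
    proof -
      have h1: "real N / real q \<le> 1" using Nq q0 by simp
      have h2: "0 \<le> real (card A) * real (card B) * Qd" unfolding Qd_def by simp
      have h3: "0 \<le> real N / real q" by simp
      have "real N / real q * (real (card A) * real (card B) * Qd) \<le> real (card A) * real (card B) * Qd"
        by (rule mult_left_le_one_le[OF h2 h3 h1])
      then show ?thesis unfolding X_def Qd_def using q0
        by (simp add: field_simps power2_eq_square)
    qed
    finally show ?thesis .
  qed
  show ?thesis unfolding Let_def RX using ineq by simp
qed

end
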